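(* Let $P = \{p_1,\dots,p_s\}$ and $P' = \{p'_1,\dots,p'_s\}$ be width-$k$ puzzles of size $s$, each with a fixed enumeration of its rows. If there is a graph isomorphism $\varphi : G_P \to G_{P'}$ that maps row vertices to row vertices, column vertices to column vertices, element vertices to element vertices, and cell vertices to cell vertices, then there exist $\rho \in \mathrm{Sym}([k])$ and $\delta \in \mathrm{Sym}(\{1,2,3\})$ such that $P' = \{(\delta(r_{\rho(c)}))_{c \in [k]} : r \in P\}$. Consequently $P$ is a strong USP if and only if $P'$ is a strong USP.
   Context: A width-$k$ puzzle is a finite set $P \subseteq \{1,2,3\}^k$; for $r\in P$, $r_c$ is its $c$-th coordinate. For a puzzle $P=\{p_1,\dots,p_s\}$ with rows enumerated, $G_P$ is the undirected graph with vertex set the disjoint union of row vertices $\{\mathrm{row}_i\}_{i\in[s]}$, column vertices $\{\mathrm{col}_c\}_{c\in[k]}$, element vertices $\{e_j\}_{j\in\{1,2,3\}}$, and cell vertices $\{v_{i,c}\}_{(i,c)\in[s]\times[k]}$, where each cell vertex $v_{i,c}$ is adjacent exactly to $\mathrm{row}_i$, $\mathrm{col}_c$, and $e_{(p_i)_c}$, and there are no other edges. $P$ is a strong USP if for all $\pi_1,\pi_2,\pi_3 \in \mathrm{Sym}(P)$, either $\pi_1=\pi_2=\pi_3$, or there exist $r \in P$ and $c \in [k]$ such that exactly two of $(\pi_1(r))_c = 1$, $(\pi_2(r))_c = 2$, $(\pi_3(r))_c = 3$ hold. *)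

theory Defs
  imports "HOL-Combinatorics.Permutations"
begin

text \<open>Conventions: a row of a width-k puzzle is a list of length k with entries in {1,2,3};
  columns are indexed by {0..<k} (0-based), rows of an enumerated puzzle by {0..<s}.\<close>

definition puzzle :: "nat \<Rightarrow> nat list set \<Rightarrow> bool" where
  "puzzle k P \<longleftrightarrow> finite P \<and> (\<forall>r\<in>P. length r = k \<and> set r \<subseteq> {1,2,3})"

definition strong_USP :: "nat \<Rightarrow> nat list set \<Rightarrow> bool" where
  "strong_USP k P \<longleftrightarrow>
     (\<forall>\<pi>1 \<pi>2 \<pi>3. \<pi>1 permutes P \<longrightarrow> \<pi>2 permutes P \<longrightarrow> \<pi>3 permutes P \<longrightarrow>
        (\<pi>1 = \<pi>2 \<and> \<pi>2 = \<pi>3) \<or>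
        (\<exists>r\<in>P. \<exists>c<k.
            let A = ((\<pi>1 r) ! c = 1); B = ((\<pi>2 r) ! c = 2); C = ((\<pi>3 r) ! c = 3)
            in (A \<and> B \<and> \<not> C) \<or> (A \<and> \<not> B \<and> C) \<or> (\<not> A \<and> B \<and> C)))"

datatype vtx = Row nat | Col nat | Elem nat | Cell nat nat

fun vkind :: "vtx \<Rightarrow> nat" where
  "vkind (Row _) = 0" | "vkind (Col _) = 1" | "vkind (Elem _) = 2" | "vkind (Cell _ _) = 3"

definition gverts :: "nat \<Rightarrow> nat \<Rightarrow> vtx set" where
  "gverts s k = Row ` {..<s} \<union> Col ` {..<k} \<union> Elem ` {1,2,3} \<union>
     {Cell i c | i c. i < s \<and> c < k}"

definition gadj :: "(nat \<Rightarrow> nat list) \<Rightarrow> nat \<Rightarrow> nat \<Rightarrow> vtx \<Rightarrow> vtx \<Rightarrow> bool" where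
  "gadj p s k u v \<longleftrightarrow> (\<exists>i c. i < s \<and> c < k \<and>
     ((u = Cell i c \<and> (v = Row i \<or> v = Col c \<or> v = Elem (p i ! c))) \<or>
      (v = Cell i c \<and> (u = Row i \<or> u = Col c \<or> u = Elem (p i ! c)))))"

definition type_preserving_iso ::
  "(vtx \<Rightarrow> vtx) \<Rightarrow> (nat \<Rightarrow> nat list) \<Rightarrow> (nat \<Rightarrow> nat list) \<Rightarrow> nat \<Rightarrow> nat \<Rightarrow> bool" where
  "type_preserving_iso \<phi> p p' s k \<longleftrightarrow>
     bij_betw \<phi> (gverts s k) (gverts s k) \<and>
     (\<forall>u\<in>gverts s k. \<forall>v\<in>gverts s k. gadj p s k u v \<longleftrightarrow> gadj p' s k (\<phi> u) (\<phi> v)) \<and>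
     (\<forall>u\<in>gverts s k. vkind (\<phi> u) = vkind u)"

end

theory Submission
  imports Defs
begin

definition ex2 :: "bool \<Rightarrow> bool \<Rightarrow> bool \<Rightarrow> bool" where
  "ex2 A B C \<longleftrightarrow> (A \<and> B \<and> \<not> C) \<or> (A \<and> \<not> B \<and> C) \<or> (\<not> A \<and> B \<and> C)"

lemma strong_USP_alt:
  "strong_USP k P \<longleftrightarrow>
     (\<forall>\<pi>1 \<pi>2 \<pi>3. \<pi>1 permutes P \<longrightarrow> \<pi>2 permutes P \<longrightarrow> \<pi>3 permutes P \<longrightarrow>
        (\<pi>1 = \<pi>2 \<and> \<pi>2 = \<pi>3) \<or>
        (\<exists>r\<in>P. \<exists>c<k. ex2 ((\<pi>1 r) ! c = 1) ((\<pi>2 r) ! c = 2) ((\<pi>3 r) ! c = 3)))"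
  by (simp add: strong_USP_def ex2_def Let_def)

lemma conj_perm:
  assumes bij: "bij_betw f P Q" and pq: "\<pi>' permutes Q"
  shows "\<exists>\<pi>. \<pi> permutes P \<and> (\<forall>r\<in>P. \<pi>' (f r) = f (\<pi> r))"
proof -
  let ?h = "inv_into P f"
  have hb: "bij_betw ?h Q P" using bij by (rule bij_betw_inv_into)
  define \<pi> where "\<pi> = (\<lambda>x. if x \<in> P then ?h (\<pi>' (inv_into Q ?h x)) else x)"
  have "\<pi> permutes P" unfolding \<pi>_def by (rule permutes_bij_inv_into[OF pq hb])
  moreover have "\<pi>' (f r) = f (\<pi> r)" if r: "r \<in> P" for r
  proof -
    have inj: "inj_on f P" using bij by (rule bij_betw_imp_inj_on)
    have fr: "f r \<in> Q" using bij r by (metis bij_betwE)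
    have "?h (f r) = r" using inj r by (rule inv_into_f_f)
    moreover have "inj_on ?h Q" using hb by (rule bij_betw_imp_inj_on)
    ultimately have "inv_into Q ?h r = f r" using fr by (metis inv_into_f_f)
    hence "\<pi> r = ?h (\<pi>' (f r))" using r by (simp add: \<pi>_def)
    moreover have "\<pi>' (f r) \<in> Q" using fr pq by (simp add: permutes_in_image)
    moreover have "Q = f ` P" using bij by (rule bij_betw_imp_surj_on[symmetric])
    ultimately show ?thesis using f_inv_into_f[of "\<pi>' (f r)" f P] by simp
  qed
  ultimately show ?thesis by blast
qed

definition tr :: "nat \<Rightarrow> (nat \<Rightarrow> nat) \<Rightarrow> (nat \<Rightarrow> nat) \<Rightarrow> nat list \<Rightarrow> nat list" where
  "tr k \<rho> \<delta> r = map (\<lambda>c. \<delta> (r ! \<rho> c)) [0..<k]"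

lemma tr_nth: "c < k \<Longrightarrow> tr k \<rho> \<delta> r ! c = \<delta> (r ! \<rho> c)"
  by (simp add: tr_def)

lemma tr_len: "length (tr k \<rho> \<delta> r) = k"
  by (simp add: tr_def)

lemma tr_inv:
  assumes "length r = k" "\<rho> permutes {..<k}" "\<delta> permutes (S::nat set)"
  shows "tr k (inv \<rho>) (inv \<delta>) (tr k \<rho> \<delta> r) = r"
proof (rule nth_equalityI)
  show "length (tr k (inv \<rho>) (inv \<delta>) (tr k \<rho> \<delta> r)) = length r" using assms by (simp add: tr_len)
  fix c assume "c < length (tr k (inv \<rho>) (inv \<delta>) (tr k \<rho> \<delta> r))"
  hence c: "c < k" by (simp add: tr_len)
  have ic: "inv \<rho> c < k" using permutes_in_image[OF permutes_inv[OF assms(2)]] c by simp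
  show "tr k (inv \<rho>) (inv \<delta>) (tr k \<rho> \<delta> r) ! c = r ! c"
    using c ic by (simp add: tr_nth permutes_inverses[OF assms(2)] permutes_inverses[OF assms(3)])
qed

lemma perm3_cases:
  assumes "\<delta> permutes {1,2,3::nat}"
  shows "(\<delta> 1 = 1 \<and> \<delta> 2 = 2 \<and> \<delta> 3 = 3) \<or> (\<delta> 1 = 1 \<and> \<delta> 2 = 3 \<and> \<delta> 3 = 2) \<or>
         (\<delta> 1 = 2 \<and> \<delta> 2 = 1 \<and> \<delta> 3 = 3) \<or> (\<delta> 1 = 2 \<and> \<delta> 2 = 3 \<and> \<delta> 3 = 1) \<or>
         (\<delta> 1 = 3 \<and> \<delta> 2 = 1 \<and> \<delta> 3 = 2) \<or> (\<delta> 1 = 3 \<and> \<delta> 2 = 2 \<and> \<delta> 3 = 1)"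
proof -
  have inj: "inj \<delta>" using assms permutes_inj by blast
  have "\<delta> x \<in> {1,2,3}" if "x \<in> {1,2,3}" for x using that by (simp only: permutes_in_image[OF assms])
  hence a: "\<delta> 1 \<in> {1,2,3}" "\<delta> 2 \<in> {1,2,3}" "\<delta> 3 \<in> {1,2,3}" by simp_all
  have d: "\<delta> 1 \<noteq> \<delta> 2" "\<delta> 1 \<noteq> \<delta> 3" "\<delta> 2 \<noteq> \<delta> 3"
    using inj_eq[OF inj, of 1 2] inj_eq[OF inj, of 1 3] inj_eq[OF inj, of 2 3] by simp_all
  show ?thesis using a d by (simp only: insert_iff empty_iff) (elim disjE; simp)
qed

lemma ex2_perm:
  assumes "\<delta> permutes {1,2,3::nat}"
  shows "ex2 (\<delta> (Y 1) = 1) (\<delta> (Y 2) = 2) (\<delta> (Y 3) = 3) \<longleftrightarrow>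
         ex2 (Y (\<delta> 1) = 1) (Y (\<delta> 2) = 2) (Y (\<delta> 3) = 3)"
proof -
  have e: "\<delta> x = j \<longleftrightarrow> x = inv \<delta> j" for x j
    using permutes_inv_eq[OF assms] by metis
  have L: "ex2 (\<delta> (Y 1) = 1) (\<delta> (Y 2) = 2) (\<delta> (Y 3) = 3) \<longleftrightarrow>
      ex2 (Y 1 = inv \<delta> 1) (Y 2 = inv \<delta> 2) (Y 3 = inv \<delta> 3)"
    by (simp only: e)
  have iv: "inv \<delta> y = x \<longleftrightarrow> \<delta> x = y" for x y using permutes_inv_eq[OF assms] .
  from perm3_cases[OF assms] show ?thesis
  proof (elim disjE conjE)
    assume h: "\<delta> 1 = 1" "\<delta> 2 = 2" "\<delta> 3 = 3"
    hence "inv \<delta> 1 = 1" "inv \<delta> 2 = 2" "inv \<delta> 3 = 3" by (simp_all only: iv)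
    thus ?thesis unfolding L h by (simp add: ex2_def)
  next
    assume h: "\<delta> 1 = 1" "\<delta> 2 = 3" "\<delta> 3 = 2"
    hence "inv \<delta> 1 = 1" "inv \<delta> 3 = 2" "inv \<delta> 2 = 3" by (simp_all only: iv)
    thus ?thesis unfolding L h by (simp add: ex2_def) blast
  next
    assume h: "\<delta> 1 = 2" "\<delta> 2 = 1" "\<delta> 3 = 3"
    hence "inv \<delta> 2 = 1" "inv \<delta> 1 = 2" "inv \<delta> 3 = 3" by (simp_all only: iv)
    thus ?thesis unfolding L h by (simp add: ex2_def) blast
  next
    assume h: "\<delta> 1 = 2" "\<delta> 2 = 3" "\<delta> 3 = 1"
    hence "inv \<delta> 2 = 1" "inv \<delta> 3 = 2" "inv \<delta> 1 = 3" by (simp_all only: iv)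
    thus ?thesis unfolding L h by (simp add: ex2_def) blast
  next
    assume h: "\<delta> 1 = 3" "\<delta> 2 = 1" "\<delta> 3 = 2"
    hence "inv \<delta> 3 = 1" "inv \<delta> 1 = 2" "inv \<delta> 2 = 3" by (simp_all only: iv)
    thus ?thesis unfolding L h by (simp add: ex2_def) blast
  next
    assume h: "\<delta> 1 = 3" "\<delta> 2 = 2" "\<delta> 3 = 1"
    hence "inv \<delta> 3 = 1" "inv \<delta> 2 = 2" "inv \<delta> 1 = 3" by (simp_all only: iv)
    thus ?thesis unfolding L h by (simp add: ex2_def) blast
  qed
qed

lemma perm_eq_transfer:
  assumes "\<pi>1' permutes Q" "\<pi>2' permutes Q" "Q = f ` P"
    and "\<forall>r\<in>P. \<pi>1' (f r) = f (\<pi> r)" "\<forall>r\<in>P. \<pi>2' (f r) = f (\<pi> r)"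
  shows "\<pi>1' = \<pi>2'"
proof (rule ext)
  fix x show "\<pi>1' x = \<pi>2' x"
  proof (cases "x \<in> Q")
    case True
    then obtain r where "r \<in> P" "x = f r" using assms(3) by blast
    then show ?thesis using assms(4,5) by simp
  next
    case False
    then show ?thesis using permutes_not_in[OF assms(1)] permutes_not_in[OF assms(2)] by simp
  qed
qed

lemma usp_transfer:
  assumes pz: "puzzle k P" and rho: "\<rho> permutes {..<k}" and dl: "\<delta> permutes {1,2,3::nat}"
    and u: "strong_USP k P"
  shows "strong_USP k (tr k \<rho> \<delta> ` P)"
proof -
  let ?f = "tr k \<rho> \<delta>"
  let ?Q = "?f ` P"
  have len: "\<And>r. r\<in>P \<Longrightarrow> length r = k" using pz puzzle_def by auto
  have inj: "inj_on ?f P"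
    by (rule inj_on_inverseI[where g="tr k (inv \<rho>) (inv \<delta>)"]) (simp add: tr_inv[OF len rho dl])
  have bij: "bij_betw ?f P ?Q" using inj by (simp add: bij_betw_def)
  show ?thesis unfolding strong_USP_alt
  proof (intro allI impI)
    fix \<pi>1' \<pi>2' \<pi>3' assume p1: "\<pi>1' permutes ?Q" and p2: "\<pi>2' permutes ?Q" and p3: "\<pi>3' permutes ?Q"
    obtain \<pi>1 where q1: "\<pi>1 permutes P" and c1: "\<forall>r\<in>P. \<pi>1' (?f r) = ?f (\<pi>1 r)"
      using conj_perm[OF bij p1] by blast
    obtain \<pi>2 where q2: "\<pi>2 permutes P" and c2: "\<forall>r\<in>P. \<pi>2' (?f r) = ?f (\<pi>2 r)"
      using conj_perm[OF bij p2] by blast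
    obtain \<pi>3 where q3: "\<pi>3 permutes P" and c3: "\<forall>r\<in>P. \<pi>3' (?f r) = ?f (\<pi>3 r)"
      using conj_perm[OF bij p3] by blast
    define PP where "PP = (\<lambda>j::nat. if j = 1 then \<pi>1 else if j = 2 then \<pi>2 else \<pi>3)"
    have PPp: "PP j permutes P" for j using q1 q2 q3 by (simp add: PP_def)
    from u have "(PP (\<delta> 1) = PP (\<delta> 2) \<and> PP (\<delta> 2) = PP (\<delta> 3)) \<or>
        (\<exists>r\<in>P. \<exists>c<k. ex2 ((PP (\<delta> 1) r)!c = 1) ((PP (\<delta> 2) r)!c = 2) ((PP (\<delta> 3) r)!c = 3))"
      unfolding strong_USP_alt using PPp by blast
    thus "(\<pi>1' = \<pi>2' \<and> \<pi>2' = \<pi>3') \<or>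
        (\<exists>r\<in>?Q. \<exists>c<k. ex2 ((\<pi>1' r)!c = 1) ((\<pi>2' r)!c = 2) ((\<pi>3' r)!c = 3))"
    proof
      assume eq: "PP (\<delta> 1) = PP (\<delta> 2) \<and> PP (\<delta> 2) = PP (\<delta> 3)"
      have "\<pi>1 = \<pi>2 \<and> \<pi>2 = \<pi>3" using perm3_cases[OF dl] eq
        by (elim disjE) (simp_all add: PP_def)
      hence "\<pi>1' = \<pi>2' \<and> \<pi>2' = \<pi>3'"
        using perm_eq_transfer[OF p1 p2 refl c1] perm_eq_transfer[OF p2 p3 refl c2] c2 c3 by simp
      thus ?thesis ..
    next
      assume "\<exists>r\<in>P. \<exists>c<k. ex2 ((PP (\<delta> 1) r)!c = 1) ((PP (\<delta> 2) r)!c = 2) ((PP (\<delta> 3) r)!c = 3)"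
      then obtain r c0 where r: "r \<in> P" "c0 < k"
        and ex: "ex2 ((PP (\<delta> 1) r)!c0 = 1) ((PP (\<delta> 2) r)!c0 = 2) ((PP (\<delta> 3) r)!c0 = 3)" by blast
      define c where "c = inv \<rho> c0"
      have c: "c < k" unfolding c_def using permutes_in_image[OF permutes_inv[OF rho]] r(2) by simp
      have rc: "\<rho> c = c0" unfolding c_def by (rule permutes_inverses(1)[OF rho])
      have e1: "(\<pi>1' (?f r)) ! c = \<delta> ((PP 1 r) ! c0)" using c1 r c rc by (simp add: tr_nth PP_def)
      have e2: "(\<pi>2' (?f r)) ! c = \<delta> ((PP 2 r) ! c0)" using c2 r c rc by (simp add: tr_nth PP_def)
      have e3: "(\<pi>3' (?f r)) ! c = \<delta> ((PP 3 r) ! c0)" using c3 r c rc by (simp add: tr_nth PP_def)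
      have "ex2 (\<delta> ((PP 1 r)!c0) = 1) (\<delta> ((PP 2 r)!c0) = 2) (\<delta> ((PP 3 r)!c0) = 3)"
        using ex2_perm[OF dl, where Y="\<lambda>j. (PP j r)!c0"] ex by simp
      hence "ex2 ((\<pi>1' (?f r))!c = 1) ((\<pi>2' (?f r))!c = 2) ((\<pi>3' (?f r))!c = 3)"
        by (simp only: e1 e2 e3)
      moreover have "?f r \<in> ?Q" using r by blast
      ultimately show ?thesis using c by blast
    qed
  qed
qed

lemma gadj_cell_row: "gadj q s k (Cell a b) (Row j) \<longleftrightarrow> a < s \<and> b < k \<and> j = a"
  by (auto simp: gadj_def)
lemma gadj_cell_col: "gadj q s k (Cell a b) (Col j) \<longleftrightarrow> a < s \<and> b < k \<and> j = b"
  by (auto simp: gadj_def)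
lemma gadj_cell_elem: "gadj q s k (Cell a b) (Elem x) \<longleftrightarrow> a < s \<and> b < k \<and> x = q a ! b"
  by (auto simp: gadj_def)

fun idx :: "vtx \<Rightarrow> nat" where
  "idx (Row j) = j" | "idx (Col j) = j" | "idx (Elem j) = j" | "idx (Cell a b) = a"

lemma kind0: "v \<in> gverts s k \<Longrightarrow> vkind v = 0 \<Longrightarrow> v = Row (idx v) \<and> idx v < s"
  by (cases v) (auto simp: gverts_def)
lemma kind1: "v \<in> gverts s k \<Longrightarrow> vkind v = 1 \<Longrightarrow> v = Col (idx v) \<and> idx v < k"
  by (cases v) (auto simp: gverts_def)
lemma kind2: "v \<in> gverts s k \<Longrightarrow> vkind v = 2 \<Longrightarrow> v = Elem (idx v) \<and> idx v \<in> {1,2,3}"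
  by (cases v) (auto simp: gverts_def)
lemma kind3: "v \<in> gverts s k \<Longrightarrow> vkind v = 3 \<Longrightarrow> \<exists>a b. v = Cell a b \<and> a < s \<and> b < k"
  by (cases v) (auto simp: gverts_def)

lemma inGV: "i < s \<Longrightarrow> Row i \<in> gverts s k" "c < k \<Longrightarrow> Col c \<in> gverts s k"
  "e \<in> {1,2,3} \<Longrightarrow> Elem e \<in> gverts s k" "i < s \<Longrightarrow> c < k \<Longrightarrow> Cell i c \<in> gverts s k"
  by (auto simp: gverts_def)

lemma endo_bij:
  assumes "finite A" "\<And>x. x \<in> A \<Longrightarrow> f x \<in> A" "inj_on f A"
  shows "bij_betw f A A"
proof -
  have "f ` A \<subseteq> A" using assms(2) by blast
  hence "f ` A = A" using endo_inj_surj assms(1,3) by blast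
  thus ?thesis using assms(3) by (simp add: bij_betw_def)
qed

lemma existence:
  assumes pz: "puzzle k P" and pz': "puzzle k P'"
    and bp: "bij_betw p {..<s} P" and bp': "bij_betw p' {..<s} P'"
    and iso: "type_preserving_iso \<phi> p p' s k"
  shows "\<exists>\<rho> \<delta>. \<rho> permutes {..<k} \<and> \<delta> permutes {1,2,3::nat} \<and> P' = tr k \<rho> \<delta> ` P"
proof -
  let ?V = "gverts s k"
  have b\<phi>: "bij_betw \<phi> ?V ?V" and adj: "\<And>u v. u \<in> ?V \<Longrightarrow> v \<in> ?V \<Longrightarrow> gadj p s k u v \<longleftrightarrow> gadj p' s k (\<phi> u) (\<phi> v)"
    and kd: "\<And>u. u \<in> ?V \<Longrightarrow> vkind (\<phi> u) = vkind u"
    using iso unfolding type_preserving_iso_def by blast+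
  have inV: "\<And>u. u \<in> ?V \<Longrightarrow> \<phi> u \<in> ?V" using b\<phi> bij_betwE by blast
  have injV: "inj_on \<phi> ?V" using b\<phi> bij_betw_imp_inj_on by blast
  have Pim: "P = p ` {..<s}" using bp bij_betw_imp_surj_on by metis
  have P'im: "P' = p' ` {..<s}" using bp' bij_betw_imp_surj_on by metis
  have pP: "i < s \<Longrightarrow> p i \<in> P" for i using Pim by blast
  have p'P: "i < s \<Longrightarrow> p' i \<in> P'" for i using P'im by blast
  have lenp: "i < s \<Longrightarrow> length (p i) = k" for i using pP pz unfolding puzzle_def by blast
  have setp: "i < s \<Longrightarrow> set (p i) \<subseteq> {1,2,3}" for i using pP pz unfolding puzzle_def by blast
  have lenp': "i < s \<Longrightarrow> length (p' i) = k" for i using p'P pz' unfolding puzzle_def by blast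
  have pval: "p i ! c \<in> {1,2,3}" if "i < s" "c < k" for i c
  proof -
    have "p i ! c \<in> set (p i)" using that lenp[of i] by simp
    thus ?thesis using setp[OF that(1)] by blast
  qed
  define \<sigma> where "\<sigma> i = idx (\<phi> (Row i))" for i
  define \<tau> where "\<tau> c = idx (\<phi> (Col c))" for c
  define \<delta>0 where "\<delta>0 e = idx (\<phi> (Elem e))" for e
  have R: "i < s \<Longrightarrow> \<phi> (Row i) = Row (\<sigma> i) \<and> \<sigma> i < s" for i
    unfolding \<sigma>_def using kind0[OF inV[OF inGV(1)]] kd[OF inGV(1)] by simp
  have C: "c < k \<Longrightarrow> \<phi> (Col c) = Col (\<tau> c) \<and> \<tau> c < k" for c
    unfolding \<tau>_def using kind1[OF inV[OF inGV(2)]] kd[OF inGV(2)] by simp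
  have E: "e \<in> {1,2,3} \<Longrightarrow> \<phi> (Elem e) = Elem (\<delta>0 e) \<and> \<delta>0 e \<in> {1,2,3}" for e
    unfolding \<delta>0_def using kind2[OF inV[OF inGV(3)]] kd[OF inGV(3)] by simp
  have K: "p' (\<sigma> i) ! (\<tau> c) = \<delta>0 (p i ! c)" if i: "i < s" and c: "c < k" for i c
  proof -
    have cv: "Cell i c \<in> ?V" using i c by (rule inGV(4))
    obtain a b where ab: "\<phi> (Cell i c) = Cell a b" using kind3[OF inV[OF cv]] kd[OF cv] by auto
    have "gadj p s k (Cell i c) (Row i)" using i c by (simp add: gadj_cell_row)
    hence "gadj p' s k (Cell a b) (Row (\<sigma> i))" using adj[OF cv inGV(1)[OF i]] ab R[OF i] by simp
    hence a: "a = \<sigma> i" by (simp add: gadj_cell_row)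
    have "gadj p s k (Cell i c) (Col c)" using i c by (simp add: gadj_cell_col)
    hence "gadj p' s k (Cell a b) (Col (\<tau> c))" using adj[OF cv inGV(2)[OF c]] ab C[OF c] by simp
    hence b: "b = \<tau> c" by (simp add: gadj_cell_col)
    have pv: "p i ! c \<in> {1,2,3}" using pval i c by blast
    have "gadj p s k (Cell i c) (Elem (p i ! c))" using i c by (simp add: gadj_cell_elem)
    hence "gadj p' s k (Cell a b) (Elem (\<delta>0 (p i ! c)))" using adj[OF cv inGV(3)[OF pv]] ab E[OF pv] by simp
    thus ?thesis using a b by (simp add: gadj_cell_elem)
  qed
  have b\<sigma>: "bij_betw \<sigma> {..<s} {..<s}"
  proof (rule endo_bij)
    show "inj_on \<sigma> {..<s}"
    proof (rule inj_onI)
      fix x y assume "x \<in> {..<s}" "y \<in> {..<s}" "\<sigma> x = \<sigma> y"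
      hence "\<phi> (Row x) = \<phi> (Row y)" "Row x \<in> ?V" "Row y \<in> ?V" using R inGV(1) by auto
      thus "x = y" using injV inj_onD by fastforce
    qed
  qed (use R in auto)
  have b\<tau>: "bij_betw \<tau> {..<k} {..<k}"
  proof (rule endo_bij)
    show "inj_on \<tau> {..<k}"
    proof (rule inj_onI)
      fix x y assume "x \<in> {..<k}" "y \<in> {..<k}" "\<tau> x = \<tau> y"
      hence "\<phi> (Col x) = \<phi> (Col y)" "Col x \<in> ?V" "Col y \<in> ?V" using C inGV(2) by auto
      thus "x = y" using injV inj_onD by fastforce
    qed
  qed (use C in auto)
  have b\<delta>0: "bij_betw \<delta>0 {1,2,3} {1,2,3}"
  proof (rule endo_bij)
    show "inj_on \<delta>0 {1,2,3}"
    proof (rule inj_onI)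
      fix x y assume xy: "x \<in> {1,2,3}" "y \<in> {1,2,3}" "\<delta>0 x = \<delta>0 y"
      hence "\<phi> (Elem x) = \<phi> (Elem y)" "Elem x \<in> ?V" "Elem y \<in> ?V" using E[OF xy(1)] E[OF xy(2)] inGV(3) by auto
      thus "x = y" using injV inj_onD by fastforce
    qed
  qed (use E in auto)
  define \<delta> where "\<delta> e = (if e \<in> {1,2,3} then \<delta>0 e else e)" for e :: nat
  define \<rho> where "\<rho> c = (if c < k then inv_into {..<k} \<tau> c else c)" for c
  have d\<delta>: "\<delta> permutes {1,2,3}"
  proof (rule bij_imp_permutes)
    show "bij_betw \<delta> {1,2,3} {1,2,3}" using b\<delta>0 by (rule bij_betw_cong[THEN iffD1, rotated]) (simp add: \<delta>_def)
  qed (simp add: \<delta>_def)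
  have d\<rho>: "\<rho> permutes {..<k}"
  proof (rule bij_imp_permutes)
    show "bij_betw \<rho> {..<k} {..<k}" using bij_betw_inv_into[OF b\<tau>]
      by (rule bij_betw_cong[THEN iffD1, rotated]) (simp add: \<rho>_def)
  qed (simp add: \<rho>_def)
  have \<rho>k: "c < k \<Longrightarrow> \<rho> c < k" for c using d\<rho> permutes_in_image by fastforce
  have \<tau>\<rho>: "c < k \<Longrightarrow> \<tau> (\<rho> c) = c" for c
    unfolding \<rho>_def using b\<tau> by (simp add: bij_betw_imp_surj_on f_inv_into_f)
  have eq: "p' (\<sigma> i) = tr k \<rho> \<delta> (p i)" if i: "i < s" for i
  proof (rule nth_equalityI)
    show "length (p' (\<sigma> i)) = length (tr k \<rho> \<delta> (p i))" using lenp' R i by (simp add: tr_len)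
    fix c assume "c < length (p' (\<sigma> i))"
    hence c: "c < k" using lenp' R i by simp
    have "p' (\<sigma> i) ! c = p' (\<sigma> i) ! \<tau> (\<rho> c)" using \<tau>\<rho> c by simp
    also have "\<dots> = \<delta>0 (p i ! \<rho> c)" using K i \<rho>k c by blast
    also have "\<dots> = \<delta> (p i ! \<rho> c)" using pval[OF i \<rho>k[OF c]] by (simp add: \<delta>_def)
    also have "\<dots> = tr k \<rho> \<delta> (p i) ! c" using c by (simp add: tr_nth)
    finally show "p' (\<sigma> i) ! c = tr k \<rho> \<delta> (p i) ! c" .
  qed
  have "P' = p' ` (\<sigma> ` {..<s})" using P'im b\<sigma> bij_betw_imp_surj_on by metis
  also have "\<dots> = (\<lambda>i. tr k \<rho> \<delta> (p i)) ` {..<s}" using eq by (auto simp: image_iff)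
  also have "\<dots> = tr k \<rho> \<delta> ` P" using Pim by (simp add: image_image)
  finally show ?thesis using d\<rho> d\<delta> by blast
qed

theorem mainTheorem8:
  fixes k s :: nat and P P' :: "nat list set" and p p' :: "nat \<Rightarrow> nat list"
    and \<phi> :: "vtx \<Rightarrow> vtx"
  assumes "puzzle k P" and "puzzle k P'"
    and "bij_betw p {..<s} P" and "bij_betw p' {..<s} P'"
    and "type_preserving_iso \<phi> p p' s k"
  shows "(\<exists>\<rho> \<delta>. \<rho> permutes {..<k} \<and> \<delta> permutes {1,2,3::nat} \<and>
            P' = (\<lambda>r. map (\<lambda>c. \<delta> (r ! \<rho> c)) [0..<k]) ` P)
         \<and> (strong_USP k P \<longleftrightarrow> strong_USP k P')"
proof -
  obtain \<rho> \<delta> where r: "\<rho> permutes {..<k}" and d: "\<delta> permutes {1,2,3::nat}"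
    and P': "P' = tr k \<rho> \<delta> ` P"
    using existence[OF assms] by blast
  have trf: "tr k \<rho> \<delta> = (\<lambda>r. map (\<lambda>c. \<delta> (r ! \<rho> c)) [0..<k])" by (rule ext) (simp add: tr_def)
  have len: "\<And>r. r\<in>P \<Longrightarrow> length r = k" using assms(1) puzzle_def by auto
  have P: "P = tr k (inv \<rho>) (inv \<delta>) ` P'"
    unfolding P' image_image using tr_inv[OF len r d] by simp
  have "strong_USP k P \<longleftrightarrow> strong_USP k P'"
  proof
    assume "strong_USP k P" thus "strong_USP k P'" unfolding P' using usp_transfer[OF assms(1) r d] by blast
  next
    assume "strong_USP k P'" thus "strong_USP k P"
      using usp_transfer[OF assms(2) permutes_inv[OF r] permutes_inv[OF d]] P by simp
  qed
  thus ?thesis using r d P' trf by metis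
qed

end
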